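(* Let $t\ge2$ and let $A_1,\dots,A_t$ be jointly distributed random variables on a finite set whose joint distribution is invariant under all permutations of $(A_1,\dots,A_t)$. Let $\{A_1\cdots A_t\}$ denote their joint distribution and $\{A_1\}\cdots\{A_t\}$ the product of their marginal distributions. If $d_H(\{A_1\cdots A_t\},\{A_1\}\cdots\{A_t\})\ge\epsilon$, then $H(A_t\mid A_1,\dots,A_{t-1})\le H(A_1)-2\epsilon^2/t^2$.
   Context: $H$ denotes Shannon entropy with natural logarithm and $H(X\mid Y)=\mathbb{E}_{y}H(X\mid Y=y)$. The Hellinger distance between distributions $p,q$ on a finite set is $d_H(p,q)=\left(1-\sum_i\sqrt{p_iq_i}\right)^{1/2}$. *)

theory Defs
  imports "HOL-Combinatorics.Permutations" Complex_Main
begin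

text \<open>A joint distribution of t random variables on a finite type 'a is a
function p on lists of length t (the outcomes (a_1,...,a_t)).\<close>

definition tuples :: "nat \<Rightarrow> 'a list set" where
  "tuples t = {xs. length xs = t}"

text \<open>Marginal distribution of A_(i+1) (0-based index i).\<close>
definition marg :: "('a list \<Rightarrow> real) \<Rightarrow> nat \<Rightarrow> nat \<Rightarrow> 'a \<Rightarrow> real" where
  "marg p t i a = (\<Sum>xs\<in>{xs \<in> tuples t. xs ! i = a}. p xs)"

definition prod_marg :: "('a list \<Rightarrow> real) \<Rightarrow> nat \<Rightarrow> 'a list \<Rightarrow> real" where
  "prod_marg p t xs = (\<Prod>i<t. marg p t i (xs ! i))"

definition hellinger :: "'b set \<Rightarrow> ('b \<Rightarrow> real) \<Rightarrow> ('b \<Rightarrow> real) \<Rightarrow> real" where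
  "hellinger S p q = sqrt (1 - (\<Sum>x\<in>S. sqrt (p x * q x)))"

text \<open>Shannon entropy (natural log); note ln 0 = 0 in Isabelle, so 0 ln 0 = 0.\<close>
definition entropy_fun :: "'b set \<Rightarrow> ('b \<Rightarrow> real) \<Rightarrow> real" where
  "entropy_fun S f = - (\<Sum>x\<in>S. f x * ln (f x))"

definition cond_entropy_last :: "('a::finite list \<Rightarrow> real) \<Rightarrow> nat \<Rightarrow> real" where
  "cond_entropy_last p t =
     (\<Sum>ys\<in>tuples (t - 1).
        (let Py = (\<Sum>x\<in>UNIV. p (ys @ [x]))
         in Py * entropy_fun UNIV (\<lambda>x. p (ys @ [x]) / Py)))"

end

theory Submission imports Defs "HOL-Analysis.L2_Norm" begin


lemma tuples_finite: "finite (tuples n :: 'a::finite list set)"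
proof -
  have "tuples n = {xs::'a list. set xs \<subseteq> UNIV \<and> length xs = n}" by (auto simp: tuples_def)
  then show ?thesis using finite_lists_length_eq[of "UNIV::'a set" n] by simp
qed

lemma sum_tuples_split:
  fixes f :: "'a::finite list \<Rightarrow> real"
  assumes "k \<le> n"
  shows "(\<Sum>xs\<in>tuples n. f xs) = (\<Sum>ys\<in>tuples k. \<Sum>zs\<in>tuples (n-k). f (ys@zs))"
proof -
  have "(\<Sum>ys\<in>tuples k. \<Sum>zs\<in>tuples (n-k). f (ys@zs)) = (\<Sum>(ys,zs)\<in>tuples k \<times> tuples (n-k). f (ys@zs))"
    by (rule sum.cartesian_product)
  also have "\<dots> = (\<Sum>xs\<in>tuples n. f xs)"
    by (rule sum.reindex_bij_witness[where i="\<lambda>xs. (take k xs, drop k xs)" and j="\<lambda>(ys,zs). ys@zs"])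
       (use assms in \<open>auto simp: tuples_def\<close>)
  finally show ?thesis by simp
qed

lemma sum_tuples_1:
  fixes f :: "'a::finite list \<Rightarrow> real"
  shows "(\<Sum>xs\<in>tuples (Suc 0). f xs) = (\<Sum>x\<in>UNIV. f [x])"
proof -
  have "tuples (Suc 0) = range (\<lambda>x::'a. [x])" by (auto simp: tuples_def length_Suc_conv)
  then show ?thesis by (simp add: sum.reindex inj_on_def)
qed

lemma sum_tuples_Suc:
  fixes f :: "'a::finite list \<Rightarrow> real"
  shows "(\<Sum>xs\<in>tuples (Suc n). f xs) = (\<Sum>x\<in>UNIV. \<Sum>zs\<in>tuples n. f (x#zs))"
  using sum_tuples_split[of 1 "Suc n" f] by (simp add: sum_tuples_1)

lemma sum_tuples_snoc:
  fixes f :: "'a::finite list \<Rightarrow> real"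
  shows "(\<Sum>xs\<in>tuples (Suc n). f xs) = (\<Sum>ys\<in>tuples n. \<Sum>x\<in>UNIV. f (ys@[x]))"
  using sum_tuples_split[of n "Suc n" f] by (simp add: sum_tuples_1)

lemma prod_list_map_nth: "prod_list (map f xs) = (\<Prod>i<length xs. f (xs!i))"
  by (induction xs) (auto simp del: prod.lessThan_Suc simp: prod.lessThan_Suc_shift)

lemma sum_prod_list:
  fixes m :: "'a::finite \<Rightarrow> real"
  assumes "sum m UNIV = 1"
  shows "(\<Sum>zs\<in>tuples j. prod_list (map m zs)) = 1"
proof (induction j)
  case 0 then show ?case by (simp add: tuples_def)
next
  case (Suc j)
  then show ?case by (simp add: sum_tuples_Suc sum_distrib_left[symmetric] sum_distrib_right[symmetric] assms)
qed

lemma kl_term: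
  fixes a b :: real
  assumes "a \<ge> 0" "b \<ge> 0" "a > 0 \<Longrightarrow> b > 0"
  shows "a * ln (a / b) \<ge> 2*a - 2 * sqrt (a * b)"
proof (cases "a = 0")
  case True then show ?thesis by simp
next
  case False
  then have a: "a > 0" using assms by simp
  then have b: "b > 0" using assms by simp
  have "ln (b/a) = 2 * ln (sqrt (b/a))" using a b by (simp add: ln_sqrt)
  also have "\<dots> \<le> 2 * (sqrt (b/a) - 1)" using ln_le_minus_one[of "sqrt (b/a)"] a b by simp
  finally have "ln (b/a) \<le> 2 * (sqrt (b/a) - 1)" .
  moreover have "ln (a/b) = - ln (b/a)" using a b by (simp add: ln_div)
  moreover have "a * sqrt (b/a) = sqrt (a*b)"
  proof -
    have "a*b = a^2 * (b/a)" using a by (simp add: power2_eq_square field_simps)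
    moreover have "sqrt(a^2 * (b/a)) = sqrt(a^2)*sqrt(b/a)" by (rule real_sqrt_mult)
    ultimately have "sqrt(a*b) = sqrt(a^2)*sqrt(b/a)" by simp
    then show ?thesis using a by simp
  qed
  moreover have "a * ln (b/a) \<le> a * (2 * (sqrt (b/a) - 1))"
    using mult_left_mono[OF \<open>ln (b/a) \<le> 2 * (sqrt (b/a) - 1)\<close>] a by simp
  ultimately have "a * ln (a/b) \<ge> a * (-2 * (sqrt (b/a) - 1))"
    by (simp add: algebra_simps)
  then show ?thesis using \<open>a * sqrt (b/a) = sqrt (a*b)\<close> by (simp add: algebra_simps)
qed

lemma cs_sqrt:
  fixes a b :: "'b \<Rightarrow> real"
  assumes "\<And>x. x \<in> A \<Longrightarrow> a x \<ge> 0" "\<And>x. x \<in> A \<Longrightarrow> b x \<ge> 0"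
  shows "(\<Sum>x\<in>A. sqrt (a x * b x)) \<le> sqrt (sum a A * sum b A)"
proof -
  have "(\<Sum>x\<in>A. sqrt (a x * b x)) = (\<Sum>x\<in>A. \<bar>sqrt (a x)\<bar> * \<bar>sqrt (b x)\<bar>)"
    using assms by (intro sum.cong) (auto simp: real_sqrt_mult)
  also have "\<dots> \<le> L2_set (\<lambda>x. sqrt (a x)) A * L2_set (\<lambda>x. sqrt (b x)) A" by (rule L2_set_mult_ineq)
  also have "\<dots> = sqrt (sum a A * sum b A)"
    using assms by (simp add: L2_set_def real_sqrt_mult)
  finally show ?thesis .
qed

lemma L2_chain:
  fixes g :: "nat \<Rightarrow> 'b \<Rightarrow> real"
  shows "L2_set (\<lambda>x. g j x - g 0 x) A \<le> (\<Sum>k<j. L2_set (\<lambda>x. g (Suc k) x - g k x) A)"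
proof (induction j)
  case 0 then show ?case by (simp add: L2_set_def)
next
  case (Suc j)
  have "L2_set (\<lambda>x. g (Suc j) x - g 0 x) A \<le> L2_set (\<lambda>x. g (Suc j) x - g j x) A + L2_set (\<lambda>x. g j x - g 0 x) A"
    using L2_set_triangle_ineq[of "\<lambda>x. g (Suc j) x - g j x" "\<lambda>x. g j x - g 0 x" A] by simp
  then show ?case using Suc by simp
qed



locale sd =
  fixes p :: "'a::finite list \<Rightarrow> real" and n :: nat
  assumes n2: "n \<ge> 2"
    and nonneg: "\<And>xs. xs \<in> tuples n \<Longrightarrow> p xs \<ge> 0"
    and sum1: "(\<Sum>xs\<in>tuples n. p xs) = 1"
    and symm: "\<And>\<sigma> xs. \<sigma> permutes {..<n} \<Longrightarrow> xs \<in> tuples n \<Longrightarrow> p (map (\<lambda>i. xs ! \<sigma> i) [0..<n]) = p xs"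
begin

definition sw :: "nat \<Rightarrow> nat \<Rightarrow> 'a list \<Rightarrow> 'a list" where
  "sw j l xs = map (\<lambda>i. xs ! Transposition.transpose j l i) [0..<length xs]"

lemma sw_len[simp]: "length (sw j l xs) = length xs" by (simp add: sw_def)

lemma sw_nth: "i < length xs \<Longrightarrow> sw j l xs ! i = xs ! Transposition.transpose j l i"
  by (simp add: sw_def)

lemma sw_in: "xs \<in> tuples n \<Longrightarrow> sw j l xs \<in> tuples n" by (simp add: tuples_def)

lemma sw_sw: "j < length xs \<Longrightarrow> l < length xs \<Longrightarrow> sw j l (sw j l xs) = xs"
  by (rule nth_equalityI) (auto simp: sw_nth Transposition.transpose_def)

lemma p_sw: "xs \<in> tuples n \<Longrightarrow> j < n \<Longrightarrow> l < n \<Longrightarrow> p (sw j l xs) = p xs"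
  using symm[of "Transposition.transpose j l" xs] permutes_swap_id[of j "{..<n}" l]
  by (simp add: sw_def tuples_def)

lemma sum_sw:
  fixes f :: "'a list \<Rightarrow> real"
  assumes "j < n" "l < n"
  shows "(\<Sum>xs\<in>tuples n. f (sw j l xs)) = (\<Sum>xs\<in>tuples n. f xs)"
  by (rule sum.reindex_bij_witness[where i="sw j l" and j="sw j l"])
     (use assms in \<open>auto simp: tuples_def sw_sw\<close>)

abbreviation m where "m \<equiv> marg p n 0"

lemma marg_if: "marg p n i a = (\<Sum>xs\<in>tuples n. if xs!i = a then p xs else 0)"
  by (simp add: marg_def sum.inter_filter[symmetric] tuples_finite)

lemma marg_sym: assumes "i < n" shows "marg p n i a = m a"
proof -
  have n0: "0 < n" using n2 by simp
  have "marg p n i a = (\<Sum>xs\<in>tuples n. (\<lambda>xs. if xs!i = a then p xs else 0) (sw 0 i xs))"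
    unfolding marg_if by (rule sum_sw[OF n0 assms, symmetric])
  also have "\<dots> = (\<Sum>xs\<in>tuples n. if xs!0 = a then p xs else 0)"
    using assms n0 by (intro sum.cong) (auto simp: sw_nth p_sw tuples_def Transposition.transpose_def)
  finally show ?thesis by (simp add: marg_if)
qed

lemma marg_ge: "xs \<in> tuples n \<Longrightarrow> marg p n i (xs!i) \<ge> p xs"
  unfolding marg_def
  by (rule member_le_sum) (auto simp: nonneg tuples_finite)

lemma marg_nonneg: "marg p n i a \<ge> 0"
  unfolding marg_def by (rule sum_nonneg) (auto simp: nonneg)

lemma sum_m: "(\<Sum>a\<in>UNIV. m a) = 1"
proof -
  have "(\<Sum>a\<in>UNIV. m a) = (\<Sum>xs\<in>tuples n. \<Sum>a\<in>UNIV. if xs!0 = a then p xs else 0)"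
    unfolding marg_if by (rule sum.swap)
  also have "\<dots> = 1" using sum1 by simp
  finally show ?thesis .
qed

definition P :: "nat \<Rightarrow> 'a list \<Rightarrow> real" where
  "P k ys = (\<Sum>zs\<in>tuples (n-k). p (ys@zs))"

lemma P_nonneg: "length ys = k \<Longrightarrow> k \<le> n \<Longrightarrow> P k ys \<ge> 0"
  unfolding P_def by (rule sum_nonneg) (auto simp: nonneg tuples_def)

lemma tuples_0: "tuples 0 = {[]}" by (auto simp: tuples_def)

lemma P_n: "P n xs = p xs" by (simp add: P_def tuples_0)

lemma P_1: "P (Suc 0) [a] = m a"
proof -
  obtain n' where n': "n = Suc n'" using n2 by (cases n) auto
  have "m a = (\<Sum>x\<in>UNIV. \<Sum>zs\<in>tuples n'. if (x#zs)!0 = a then p (x#zs) else 0)"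
    unfolding marg_if by (simp only: n' sum_tuples_Suc)
  also have "\<dots> = (\<Sum>x\<in>UNIV. if x = a then (\<Sum>zs\<in>tuples n'. p (a#zs)) else 0)"
    by (intro sum.cong refl) auto
  also have "\<dots> = (\<Sum>zs\<in>tuples n'. p (a#zs))" by simp
  also have "\<dots> = P (Suc 0) [a]" unfolding P_def by (simp add: n')
  finally show ?thesis by simp
qed

lemma P_snoc: "k < n \<Longrightarrow> (\<Sum>y\<in>UNIV. P (Suc k) (ys@[y])) = P k ys"
proof -
  assume "k < n"
  then have "n - k = Suc (n - Suc k)" by simp
  then show ?thesis unfolding P_def by (simp add: sum_tuples_Suc)
qed

lemma sum_P: "k \<le> n \<Longrightarrow> (\<Sum>ys\<in>tuples k. P k ys) = 1"
  unfolding P_def using sum_tuples_split[of k n p] sum1 by simp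

definition Mp :: "'a list \<Rightarrow> real" where "Mp zs = prod_list (map m zs)"

lemma Mp_nonneg: "Mp zs \<ge> 0"
  unfolding Mp_def by (rule prod_list_nonneg) (auto simp: marg_nonneg)

lemma sum_Mp: "(\<Sum>zs\<in>tuples j. Mp zs) = 1"
  unfolding Mp_def by (rule sum_prod_list[OF sum_m])

definition Hyb :: "nat \<Rightarrow> 'a list \<Rightarrow> real" where
  "Hyb k xs = P k (take k xs) * Mp (drop k xs)"

lemma Hyb_nonneg: "xs \<in> tuples n \<Longrightarrow> k \<le> n \<Longrightarrow> Hyb k xs \<ge> 0"
  unfolding Hyb_def by (intro mult_nonneg_nonneg P_nonneg Mp_nonneg) (auto simp: tuples_def)

lemma Hyb_sum: "k \<le> n \<Longrightarrow> (\<Sum>xs\<in>tuples n. Hyb k xs) = 1"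
proof -
  assume k: "k \<le> n"
  have "(\<Sum>xs\<in>tuples n. Hyb k xs) = (\<Sum>ys\<in>tuples k. \<Sum>zs\<in>tuples (n-k). P k ys * Mp zs)"
    unfolding sum_tuples_split[OF k] Hyb_def
    by (intro sum.cong refl) (auto simp: tuples_def)
  also have "\<dots> = (\<Sum>ys\<in>tuples k. P k ys)" by (simp add: sum_distrib_left[symmetric] sum_Mp)
  also have "\<dots> = 1" using sum_P[OF k] .
  finally show ?thesis .
qed

lemma Hyb_n: "xs \<in> tuples n \<Longrightarrow> Hyb n xs = p xs"
  by (simp add: Hyb_def P_n Mp_def tuples_def)

lemma Hyb_1: "xs \<in> tuples n \<Longrightarrow> Hyb 1 xs = prod_marg p n xs"
proof -
  assume xs: "xs \<in> tuples n"
  then obtain x zs where xs': "xs = x # zs" using n2 by (cases xs) (auto simp: tuples_def)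
  have "Hyb 1 xs = prod_list (map m xs)" by (simp add: Hyb_def xs' P_1 Mp_def)
  also have "\<dots> = (\<Prod>i<n. m (xs!i))" using xs by (simp add: prod_list_map_nth tuples_def)
  also have "\<dots> = prod_marg p n xs" unfolding prod_marg_def
    by (intro prod.cong refl) (rule marg_sym[symmetric], simp)
  finally show ?thesis .
qed

definition BC :: "('a list \<Rightarrow> real) \<Rightarrow> ('a list \<Rightarrow> real) \<Rightarrow> real" where
  "BC f g = (\<Sum>xs\<in>tuples n. sqrt (f xs * g xs))"

definition D :: "('a list \<Rightarrow> real) \<Rightarrow> ('a list \<Rightarrow> real) \<Rightarrow> real" where
  "D f g = L2_set (\<lambda>xs. sqrt (f xs) - sqrt (g xs)) (tuples n)"

lemma D_sq:
  assumes "\<And>xs. xs \<in> tuples n \<Longrightarrow> f xs \<ge> 0" "\<And>xs. xs \<in> tuples n \<Longrightarrow> g xs \<ge> 0"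
  shows "(D f g)^2 = sum f (tuples n) + sum g (tuples n) - 2 * BC f g"
proof -
  have "(D f g)^2 = (\<Sum>xs\<in>tuples n. (sqrt (f xs) - sqrt (g xs))^2)"
    unfolding D_def L2_set_def by (simp add: sum_nonneg)
  also have "\<dots> = (\<Sum>xs\<in>tuples n. f xs + g xs - 2 * sqrt (f xs * g xs))"
    using assms by (intro sum.cong refl) (simp add: power2_diff real_sqrt_mult)
  also have "\<dots> = sum f (tuples n) + sum g (tuples n) - 2 * BC f g"
    by (simp add: BC_def sum.distrib sum_subtractf sum_distrib_left)
  finally show ?thesis .
qed

end


lemma term_ent:
  fixes a :: "'a::finite \<Rightarrow> real"
  assumes "\<And>x. a x \<ge> 0"
  shows "(let S = (\<Sum>x\<in>UNIV. a x) in S * entropy_fun UNIV (\<lambda>x. a x / S))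
         = - (\<Sum>x\<in>UNIV. a x * ln (a x / (\<Sum>x\<in>UNIV. a x)))"
proof (cases "(\<Sum>x\<in>UNIV. a x) = 0")
  case True
  then have "\<forall>x\<in>UNIV. a x = 0" using assms by (subst sum_nonneg_eq_0_iff[symmetric]) auto
  then show ?thesis by (simp add: Let_def entropy_fun_def)
next
  case False
  then show ?thesis
    by (simp add: Let_def entropy_fun_def sum_distrib_left sum_negf)
qed

lemma snoc_split: "length ys = k \<Longrightarrow> 1 \<le> k \<Longrightarrow> ys = butlast ys @ [last ys]"
  by (cases ys rule: rev_cases) auto

context sd begin

lemma Hyb_app:
  assumes "1 \<le> k" "k \<le> n" "length ys = k" "length zs = n - k"
  shows "Hyb k (ys@zs) = P k ys * Mp zs"
    "Hyb (k-1) (ys@zs) = P (k-1) (butlast ys) * (m (last ys) * Mp zs)"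
proof -
  show "Hyb k (ys@zs) = P k ys * Mp zs" using assms by (simp add: Hyb_def)
  have e: "ys @ zs = butlast ys @ (last ys # zs)" using snoc_split[OF assms(3,1)] by (metis append.assoc append_Cons append_Nil)
  have l: "length (butlast ys) = k - 1" using assms by simp
  have "Hyb (k-1) (ys@zs) = Hyb (length (butlast ys)) (butlast ys @ (last ys # zs))"
    by (simp only: l e[symmetric])
  then have "Hyb (k-1) (ys@zs) = P (k-1) (butlast ys) * Mp (last ys # zs)"
    using l by (simp add: Hyb_def)
  then show "Hyb (k-1) (ys@zs) = P (k-1) (butlast ys) * (m (last ys) * Mp zs)"
    by (simp add: Mp_def)
qed

lemma BC_Hyb:
  assumes "1 \<le> k" "k \<le> n"
  shows "BC (Hyb k) (Hyb (k-1)) = (\<Sum>ys\<in>tuples k. sqrt (P k ys * (P (k-1) (butlast ys) * m (last ys))))"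
proof -
  have "BC (Hyb k) (Hyb (k-1)) = (\<Sum>ys\<in>tuples k. \<Sum>zs\<in>tuples (n-k). sqrt (P k ys * (P (k-1) (butlast ys) * m (last ys))) * Mp zs)"
    unfolding BC_def sum_tuples_split[OF assms(2)]
  proof (intro sum.cong refl)
    fix ys zs :: "'a list" assume ys: "ys \<in> tuples k" and zs: "zs \<in> tuples (n-k)"
    have h: "Hyb k (ys@zs) * Hyb (k-1) (ys@zs) = (P k ys * (P (k-1) (butlast ys) * m (last ys))) * (Mp zs)^2"
      using Hyb_app[OF assms, of ys zs] ys zs by (simp add: tuples_def power2_eq_square)
    show "sqrt (Hyb k (ys@zs) * Hyb (k-1) (ys@zs)) = sqrt (P k ys * (P (k-1) (butlast ys) * m (last ys))) * Mp zs"
      unfolding h real_sqrt_mult using Mp_nonneg by simp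
  qed
  also have "\<dots> = (\<Sum>ys\<in>tuples k. sqrt (P k ys * (P (k-1) (butlast ys) * m (last ys))))"
    by (simp add: sum_distrib_left[symmetric] sum_Mp)
  finally show ?thesis .
qed

definition r :: "nat \<Rightarrow> 'a list \<Rightarrow> real" where
  "r j xs = (\<Sum>y\<in>UNIV. p (xs[j:=y])) * m (xs!j)"

lemma r_nonneg: "xs \<in> tuples n \<Longrightarrow> r j xs \<ge> 0"
  unfolding r_def
  by (intro mult_nonneg_nonneg sum_nonneg marg_nonneg) (auto intro!: nonneg simp: tuples_def)

lemma sum_r:
  assumes "1 \<le> k" "k \<le> n" "length ys = k"
  shows "(\<Sum>zs\<in>tuples (n-k). r (k-1) (ys@zs)) = P (k-1) (butlast ys) * m (last ys)"
proof -
  define bys where "bys = butlast ys"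
  define l where "l = last ys"
  have e: "\<And>zs. ys @ zs = bys @ (l # zs)" using snoc_split[OF assms(3,1)] unfolding bys_def l_def
    by (metis append.assoc append_Cons append_Nil)
  have lb: "length bys = k - 1" using assms by (simp add: bys_def)
  have "(\<Sum>zs\<in>tuples (n-k). r (k-1) (ys@zs)) = (\<Sum>zs\<in>tuples (n-k). (\<Sum>y\<in>UNIV. p (bys @ y # zs)) * m l)"
    unfolding e r_def using lb[symmetric] by (simp add: list_update_length)
  also have "\<dots> = m l * (\<Sum>y\<in>UNIV. \<Sum>zs\<in>tuples (n-k). p (bys @ y # zs))"
    by (simp add: sum_distrib_left sum_distrib_right mult.commute sum.swap[of _ "tuples (n-k)"])
  also have "\<dots> = m l * (\<Sum>y\<in>UNIV. P (Suc (k-1)) (bys @ [y]))"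
    using assms by (simp add: P_def)
  also have "\<dots> = m l * P (k-1) bys" using assms by (subst P_snoc) auto
  finally show ?thesis by (simp add: bys_def l_def)
qed

lemma BC_marg:
  assumes "1 \<le> k" "k \<le> n"
  shows "BC p (r (k-1)) \<le> (\<Sum>ys\<in>tuples k. sqrt (P k ys * (P (k-1) (butlast ys) * m (last ys))))"
proof -
  have "BC p (r (k-1)) = (\<Sum>ys\<in>tuples k. \<Sum>zs\<in>tuples (n-k). sqrt (p (ys@zs) * r (k-1) (ys@zs)))"
    unfolding BC_def by (rule sum_tuples_split[OF assms(2)])
  also have "\<dots> \<le> (\<Sum>ys\<in>tuples k. sqrt ((\<Sum>zs\<in>tuples (n-k). p (ys@zs)) * (\<Sum>zs\<in>tuples (n-k). r (k-1) (ys@zs))))"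
  proof (rule sum_mono)
    fix ys :: "'a list" assume ys: "ys \<in> tuples k"
    show "(\<Sum>zs\<in>tuples (n-k). sqrt (p (ys@zs) * r (k-1) (ys@zs))) \<le> sqrt ((\<Sum>zs\<in>tuples (n-k). p (ys@zs)) * (\<Sum>zs\<in>tuples (n-k). r (k-1) (ys@zs)))"
      by (rule cs_sqrt) (use ys assms in \<open>auto intro!: nonneg r_nonneg simp: tuples_def\<close>)
  qed
  also have "\<dots> = (\<Sum>ys\<in>tuples k. sqrt (P k ys * (P (k-1) (butlast ys) * m (last ys))))"
  proof (intro sum.cong refl)
    fix ys :: "'a list" assume ys: "ys \<in> tuples k"
    then have len: "length ys = k" by (simp add: tuples_def)
    show "sqrt ((\<Sum>zs\<in>tuples (n-k). p (ys@zs)) * (\<Sum>zs\<in>tuples (n-k). r (k-1) (ys@zs))) = sqrt (P k ys * (P (k-1) (butlast ys) * m (last ys)))"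
      using sum_r[OF assms len] by (simp add: P_def)
  qed
  finally show ?thesis .
qed

lemma BC_r_sym:
  assumes "j < n"
  shows "BC p (r j) = BC p (r (n-1))"
proof -
  have n1: "n - 1 < n" using n2 by simp
  have "BC p (r j) = (\<Sum>xs\<in>tuples n. (\<lambda>xs. sqrt (p xs * r j xs)) (sw j (n-1) xs))"
    unfolding BC_def by (rule sum_sw[OF assms n1, symmetric])
  also have "\<dots> = BC p (r (n-1))"
    unfolding BC_def
  proof (intro sum.cong refl)
    fix xs :: "'a list" assume xs: "xs \<in> tuples n"
    then have len: "length xs = n" by (simp add: tuples_def)
    have upd: "\<And>y. (sw j (n-1) xs)[j:=y] = sw j (n-1) (xs[n-1:=y])"
      by (rule nth_equalityI) (use assms len n1 in \<open>auto simp: sw_nth nth_list_update Transposition.transpose_def\<close>)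
    have pu: "\<And>y. p (sw j (n-1) (xs[n-1:=y])) = p (xs[n-1:=y])"
      by (rule p_sw) (use assms n1 len in \<open>auto simp: tuples_def\<close>)
    have nt: "sw j (n-1) xs ! j = xs ! (n-1)" using assms len by (simp add: sw_nth)
    have "r j (sw j (n-1) xs) = r (n-1) xs" unfolding r_def upd pu nt ..
    then show "sqrt (p (sw j (n-1) xs) * r j (sw j (n-1) xs)) = sqrt (p xs * r (n-1) xs)"
      using p_sw[OF xs assms n1] by simp
  qed
  finally show ?thesis .
qed

lemma D_Hyb_sq:
  assumes "1 \<le> k" "k \<le> n"
  shows "(D (Hyb k) (Hyb (k-1)))^2 \<le> 2 - 2 * BC p (r (n-1))"
proof -
  have "BC p (r (n-1)) = BC p (r (k-1))" using BC_r_sym[of "k-1"] assms by simp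
  also have "\<dots> \<le> BC (Hyb k) (Hyb (k-1))" using BC_marg[OF assms] BC_Hyb[OF assms] by simp
  finally have b: "BC p (r (n-1)) \<le> BC (Hyb k) (Hyb (k-1))" .
  have "(D (Hyb k) (Hyb (k-1)))^2 = 1 + 1 - 2 * BC (Hyb k) (Hyb (k-1))"
    using D_sq[of "Hyb k" "Hyb (k-1)"] Hyb_nonneg Hyb_sum assms by simp
  then show ?thesis using b by simp
qed

lemma D_chain: "D p (prod_marg p n) \<le> real (n-1) * sqrt (2 - 2 * BC p (r (n-1)))"
proof -
  define g where "g k xs = sqrt (Hyb (Suc k) xs)" for k xs
  have n1: "Suc (n-1) = n" using n2 by simp
  have "D p (prod_marg p n) = L2_set (\<lambda>x. g (n-1) x - g 0 x) (tuples n)"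
    unfolding D_def g_def n1 by (intro L2_set_cong refl) (simp add: Hyb_n Hyb_1[unfolded One_nat_def])
  also have "\<dots> \<le> (\<Sum>k<n-1. L2_set (\<lambda>x. g (Suc k) x - g k x) (tuples n))" by (rule L2_chain)
  also have "\<dots> \<le> (\<Sum>k<n-1. sqrt (2 - 2 * BC p (r (n-1))))"
  proof (rule sum_mono)
    fix k assume k: "k \<in> {..<n-1}"
    have "L2_set (\<lambda>x. g (Suc k) x - g k x) (tuples n) = D (Hyb (Suc (Suc k))) (Hyb (Suc (Suc k) - 1))"
      by (simp add: D_def g_def)
    also have "\<dots> \<le> sqrt (2 - 2 * BC p (r (n-1)))"
      by (rule real_le_rsqrt, rule D_Hyb_sq) (use k in auto)
    finally show "L2_set (\<lambda>x. g (Suc k) x - g k x) (tuples n) \<le> sqrt (2 - 2 * BC p (r (n-1)))" .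
  qed
  also have "\<dots> = real (n-1) * sqrt (2 - 2 * BC p (r (n-1)))" by simp
  finally show ?thesis .
qed

end


context sd begin

lemma R_alt:
  assumes xs: "xs \<in> tuples n"
  shows "r (n-1) xs = P (n-1) (butlast xs) * m (last xs)"
proof -
  have len: "length xs = n" using xs by (simp add: tuples_def)
  obtain bys l where e: "xs = bys @ [l]" using len n2 by (cases xs rule: rev_exhaust) auto
  have lb: "n - 1 = length bys" using len e by simp
  have s1: "n - length bys = Suc 0" using len e by simp
  have "r (n-1) xs = (\<Sum>y\<in>UNIV. p (bys @ [y])) * m l"
    unfolding r_def e lb by (simp add: list_update_length)
  also have "\<dots> = P (n-1) (butlast xs) * m (last xs)"
    unfolding e lb by (simp add: P_def s1 sum_tuples_1)
  finally show ?thesis .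
qed

lemma R_pos:
  assumes xs: "xs \<in> tuples n" and pos: "p xs > 0"
  shows "r (n-1) xs > 0"
proof -
  have len: "length xs = n" using xs by (simp add: tuples_def)
  have "p (xs[n-1 := xs!(n-1)]) \<le> (\<Sum>y\<in>UNIV. p (xs[n-1:=y]))"
    by (rule member_le_sum) (use len in \<open>auto intro!: nonneg simp: tuples_def\<close>)
  then have a: "p xs \<le> (\<Sum>y\<in>UNIV. p (xs[n-1:=y]))" by simp
  have "p xs \<le> marg p n (n-1) (xs!(n-1))" by (rule marg_ge[OF xs])
  then have b: "p xs \<le> m (xs!(n-1))" using marg_sym[of "n-1"] n2 by simp
  show ?thesis unfolding r_def using a b pos by (intro mult_pos_pos) linarith+
qed

lemma KL: "(\<Sum>xs\<in>tuples n. p xs * ln (p xs / r (n-1) xs)) \<ge> 2 - 2 * BC p (r (n-1))"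
proof -
  have "2 - 2 * BC p (r (n-1)) = (\<Sum>xs\<in>tuples n. 2 * p xs - 2 * sqrt (p xs * r (n-1) xs))"
    by (simp add: BC_def sum_subtractf sum_distrib_left[symmetric] sum1)
  also have "\<dots> \<le> (\<Sum>xs\<in>tuples n. p xs * ln (p xs / r (n-1) xs))"
  proof (rule sum_mono)
    fix xs :: "'a list" assume xs: "xs \<in> tuples n"
    show "2 * p xs - 2 * sqrt (p xs * r (n-1) xs) \<le> p xs * ln (p xs / r (n-1) xs)"
      by (rule kl_term[OF nonneg[OF xs] r_nonneg[OF xs] R_pos[OF xs]])
  qed
  finally show ?thesis .
qed

lemma Hm: "entropy_fun UNIV m = - (\<Sum>xs\<in>tuples n. p xs * ln (m (last xs)))"
proof -
  have n1: "n - 1 < n" using n2 by simp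
  have "(\<Sum>a\<in>UNIV. m a * ln (m a)) = (\<Sum>a\<in>UNIV. marg p n (n-1) a * ln (m a))"
    using marg_sym[OF n1] by simp
  also have "\<dots> = (\<Sum>a\<in>UNIV. \<Sum>xs\<in>tuples n. if xs!(n-1) = a then p xs * ln (m a) else 0)"
    unfolding marg_if sum_distrib_right by (intro sum.cong refl) auto
  also have "\<dots> = (\<Sum>xs\<in>tuples n. \<Sum>a\<in>UNIV. if xs!(n-1) = a then p xs * ln (m a) else 0)"
    by (rule sum.swap)
  also have "\<dots> = (\<Sum>xs\<in>tuples n. p xs * ln (m (last xs)))"
  proof (intro sum.cong refl)
    fix xs :: "'a list" assume "xs \<in> tuples n"
    then have "length xs = n" by (simp add: tuples_def)
    then have "xs \<noteq> []" using n2 by auto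
    then have "last xs = xs!(n-1)" using \<open>length xs = n\<close> by (simp add: last_conv_nth)
    then show "(\<Sum>a\<in>UNIV. if xs!(n-1) = a then p xs * ln (m a) else 0) = p xs * ln (m (last xs))"
      by simp
  qed
  finally show ?thesis by (simp add: entropy_fun_def)
qed

lemma P_last: "(\<Sum>x\<in>UNIV. p (ys @ [x])) = P (n-1) ys"
proof -
  have "n - (n-1) = Suc 0" using n2 by simp
  then show ?thesis by (simp add: P_def sum_tuples_1)
qed

lemma cond: "cond_entropy_last p n = - (\<Sum>xs\<in>tuples n. p xs * ln (p xs / P (n-1) (butlast xs)))"
proof -
  have n1: "Suc (n-1) = n" using n2 by simp
  have "cond_entropy_last p n = (\<Sum>ys\<in>tuples (n-1). - (\<Sum>x\<in>UNIV. p (ys@[x]) * ln (p (ys@[x]) / (\<Sum>x\<in>UNIV. p (ys@[x])))))"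
    unfolding cond_entropy_last_def
  proof (intro sum.cong refl)
    fix ys :: "'a list" assume ys: "ys \<in> tuples (n-1)"
    show "(let Py = \<Sum>x\<in>UNIV. p (ys @ [x]) in Py * entropy_fun UNIV (\<lambda>x. p (ys @ [x]) / Py)) =
          - (\<Sum>x\<in>UNIV. p (ys@[x]) * ln (p (ys@[x]) / (\<Sum>x\<in>UNIV. p (ys@[x]))))"
      by (rule term_ent) (use ys n1 in \<open>auto intro!: nonneg simp: tuples_def\<close>)
  qed
  also have "\<dots> = - (\<Sum>ys\<in>tuples (n-1). \<Sum>x\<in>UNIV. p (ys@[x]) * ln (p (ys@[x]) / P (n-1) ys))"
    by (simp add: P_last sum_negf)
  also have "\<dots> = - (\<Sum>xs\<in>tuples n. p xs * ln (p xs / P (n-1) (butlast xs)))"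
    using sum_tuples_snoc[where n="n-1" and f="\<lambda>xs. p xs * ln (p xs / P (n-1) (butlast xs))"] n1 by simp
  finally show ?thesis .
qed

lemma gap: "entropy_fun UNIV m - cond_entropy_last p n = (\<Sum>xs\<in>tuples n. p xs * ln (p xs / r (n-1) xs))"
proof -
  have "entropy_fun UNIV m - cond_entropy_last p n =
        (\<Sum>xs\<in>tuples n. p xs * ln (p xs / P (n-1) (butlast xs)) - p xs * ln (m (last xs)))"
    unfolding Hm cond by (simp add: sum_subtractf)
  also have "\<dots> = (\<Sum>xs\<in>tuples n. p xs * ln (p xs / r (n-1) xs))"
  proof (intro sum.cong refl)
    fix xs :: "'a list" assume xs: "xs \<in> tuples n"
    show "p xs * ln (p xs / P (n-1) (butlast xs)) - p xs * ln (m (last xs)) = p xs * ln (p xs / r (n-1) xs)"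
    proof (cases "p xs = 0")
      case True then show ?thesis by simp
    next
      case False
      then have pp: "p xs > 0" using nonneg[OF xs] by simp
      have rp: "P (n-1) (butlast xs) * m (last xs) > 0" using R_pos[OF xs pp] R_alt[OF xs] by simp
      have P0: "P (n-1) (butlast xs) \<ge> 0" using xs by (intro P_nonneg) (auto simp: tuples_def)
      have m0: "m (last xs) \<ge> 0" by (rule marg_nonneg)
      have Pp: "P (n-1) (butlast xs) > 0" and mp: "m (last xs) > 0"
        using rp P0 m0 by (auto simp: zero_less_mult_iff)
      show ?thesis unfolding R_alt[OF xs] using pp Pp mp
        by (simp add: ln_div ln_mult algebra_simps)
    qed
  qed
  finally show ?thesis .
qed

lemma main:
  assumes "0 \<le> \<epsilon>" "hellinger (tuples n) p (prod_marg p n) \<ge> \<epsilon>"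
  shows "cond_entropy_last p n \<le> entropy_fun UNIV m - 2 * \<epsilon>^2 / (real n)^2"
proof -
  define B where "B = BC p (r (n-1))"
  have n1: "1 \<le> n" using n2 by simp
  have "(D (Hyb n) (Hyb (n-1)))^2 \<le> 2 - 2 * B" using D_Hyb_sq[OF n1 order.refl] by (simp add: B_def)
  then have X0: "1 - B \<ge> 0" using zero_le_power2[of "D (Hyb n) (Hyb (n-1))"] by linarith
  have pm_nonneg: "\<And>xs. xs \<in> tuples n \<Longrightarrow> prod_marg p n xs \<ge> 0"
    using Hyb_nonneg[OF _ n1] Hyb_1 by metis
  have pm_sum: "sum (prod_marg p n) (tuples n) = 1"
    using Hyb_sum[OF n1] Hyb_1 by (metis (no_types, lifting) sum.cong)
  have Dsq: "(D p (prod_marg p n))^2 = 2 - 2 * BC p (prod_marg p n)"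
    using D_sq[of p "prod_marg p n"] nonneg pm_nonneg pm_sum sum1 by simp
  have hel: "hellinger (tuples n) p (prod_marg p n) = sqrt (1 - BC p (prod_marg p n))"
    by (simp add: hellinger_def BC_def)
  have h0: "1 - BC p (prod_marg p n) \<ge> 0" using Dsq zero_le_power2[of "D p (prod_marg p n)"] by linarith
  have "\<epsilon>^2 \<le> (hellinger (tuples n) p (prod_marg p n))^2"
    using assms by (intro power_mono) auto
  also have "\<dots> = (D p (prod_marg p n))^2 / 2" using h0 Dsq hel by simp
  also have "\<dots> \<le> (real (n-1) * sqrt (2 - 2 * B))^2 / 2"
  proof -
    have "D p (prod_marg p n) \<ge> 0" by (simp add: D_def)
    then have "(D p (prod_marg p n))^2 \<le> (real (n-1) * sqrt (2 - 2 * B))^2"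
      using D_chain by (intro power_mono) (auto simp: B_def)
    then show ?thesis by simp
  qed
  also have "\<dots> = (real (n-1))^2 * (1 - B)" using X0 by (simp add: power_mult_distrib)
  also have "\<dots> \<le> (real n)^2 * (1 - B)" using X0 by (intro mult_right_mono power_mono) auto
  finally have e2: "\<epsilon>^2 \<le> (real n)^2 * (1 - B)" .
  have npos: "(real n)^2 > 0" using n2 by simp
  have "2 * \<epsilon>^2 / (real n)^2 \<le> 2*((real n)^2*(1-B)) / (real n)^2"
    using e2 npos by (intro divide_right_mono) auto
  also have "\<dots> = 2 * (1 - B)" using npos by simp
  also have "\<dots> \<le> entropy_fun UNIV m - cond_entropy_last p n"
    using KL gap by (simp add: B_def)
  finally show ?thesis by simp
qed

end

theorem lemma3p3:
  fixes p :: "'a::finite list \<Rightarrow> real" and t :: nat and \<epsilon> :: real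
  assumes "t \<ge> 2"
    and "\<forall>xs\<in>tuples t. p xs \<ge> 0"
    and "(\<Sum>xs\<in>tuples t. p xs) = 1"
    and "\<forall>\<sigma> xs. \<sigma> permutes {..<t} \<and> xs \<in> tuples t \<longrightarrow>
           p (map (\<lambda>i. xs ! \<sigma> i) [0..<t]) = p xs"
    and "0 \<le> \<epsilon>"
    and "hellinger (tuples t) p (prod_marg p t) \<ge> \<epsilon>"
  shows "cond_entropy_last p t \<le> entropy_fun UNIV (marg p t 0) - 2 * \<epsilon>^2 / t^2"
proof -
  interpret sd p t by unfold_locales (use assms in auto)
  show ?thesis using main[OF assms(5,6)] by simp
qed

end
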